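(* Let $G$ be a loopless multigraph and $k\ge 1$ an integer with $k \geq \Delta^{\mu}(G)-1$. If $G^*$ has no cycle of length greater than $2$ (equivalently, merging parallel edges of $G^*$ yields a forest), then $G$ is $k$-edge-colorable.
   Context: $d(v)$ is the degree of $v$ in $G$ (counting multiplicities), $\mu(v,w)$ is the number of edges joining $v,w$, $\mu(v)=\max_w \mu(v,w)$, and $\Delta^{\mu}(G)=\max_{v\in V(G)}[d(v)+\mu(v)]$. $G^*$ is the subgraph of $G$ induced by all vertices $v$ with $d(v)+\mu(v)=\Delta^{\mu}(G)$. $k$-edge-colorable means there is an assignment of colors from $\{1,\dots,k\}$ to edges so that distinct edges sharing an endpoint get distinct colors. *)

theory Defs
  imports Main
begin

text \<open>Parallel edges are distinct edge identifiers with the same endpoint set.\<close>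
definition loopless_multigraph :: "'v set \<Rightarrow> 'e set \<Rightarrow> ('e \<Rightarrow> 'v set) \<Rightarrow> bool" where
  "loopless_multigraph V E ends \<longleftrightarrow> finite V \<and> finite E \<and>
     (\<forall>e\<in>E. ends e \<subseteq> V \<and> card (ends e) = 2)"

definition mg_degree :: "'e set \<Rightarrow> ('e \<Rightarrow> 'v set) \<Rightarrow> 'v \<Rightarrow> nat" where
  "mg_degree E ends v = card {e\<in>E. v \<in> ends e}"

definition mg_mult :: "'e set \<Rightarrow> ('e \<Rightarrow> 'v set) \<Rightarrow> 'v \<Rightarrow> 'v \<Rightarrow> nat" where
  "mg_mult E ends v w = card {e\<in>E. ends e = {v, w}}"

definition mg_mu :: "'v set \<Rightarrow> 'e set \<Rightarrow> ('e \<Rightarrow> 'v set) \<Rightarrow> 'v \<Rightarrow> nat" where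
  "mg_mu V E ends v = Max (insert 0 {mg_mult E ends v w | w. w \<in> V})"

definition mg_Delta_mu :: "'v set \<Rightarrow> 'e set \<Rightarrow> ('e \<Rightarrow> 'v set) \<Rightarrow> nat" where
  "mg_Delta_mu V E ends = Max (insert 0 {mg_degree E ends v + mg_mu V E ends v | v. v \<in> V})"

text \<open>vertex set of G^*; G^* is the subgraph induced by these vertices\<close>
definition mg_star_vertices :: "'v set \<Rightarrow> 'e set \<Rightarrow> ('e \<Rightarrow> 'v set) \<Rightarrow> 'v set" where
  "mg_star_vertices V E ends =
     {v\<in>V. mg_degree E ends v + mg_mu V E ends v = mg_Delta_mu V E ends}"

text \<open>A cycle of length n >= 3 in the subgraph induced by S: n distinct vertices of S,
  cyclically consecutive ones joined by an edge. (Cycles of length 2 are pairs of parallel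
  edges; the hypothesis only excludes cycles of length > 2.)\<close>
definition has_long_cycle_in :: "'v set \<Rightarrow> 'e set \<Rightarrow> ('e \<Rightarrow> 'v set) \<Rightarrow> bool" where
  "has_long_cycle_in S E ends \<longleftrightarrow>
     (\<exists>vs. length vs \<ge> 3 \<and> distinct vs \<and> set vs \<subseteq> S \<and>
        (\<forall>i < length vs. mg_mult E ends (vs ! i) (vs ! ((i + 1) mod length vs)) > 0))"

definition k_edge_colorable :: "nat \<Rightarrow> 'e set \<Rightarrow> ('e \<Rightarrow> 'v set) \<Rightarrow> bool" where
  "k_edge_colorable k E ends \<longleftrightarrow>
     (\<exists>c :: 'e \<Rightarrow> nat. (\<forall>e\<in>E. c e \<in> {1..k}) \<and>
        (\<forall>e\<in>E. \<forall>f\<in>E. e \<noteq> f \<and> ends e \<inter> ends f \<noteq> {} \<longrightarrow> c e \<noteq> c f))"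

end

theory Submission
  imports Defs
begin

fun wk :: "('v \<Rightarrow> 'v \<Rightarrow> bool) \<Rightarrow> 'v list \<Rightarrow> bool" where
  "wk R [] = True"
| "wk R [v] = True"
| "wk R (u#v#vs) = (R u v \<and> wk R (v#vs))"

lemma wk_nth: "wk R p \<Longrightarrow> Suc i < length p \<Longrightarrow> R (p!i) (p!Suc i)"
proof (induction R p arbitrary: i rule: wk.induct)
  case (3 R u v vs)
  then show ?case by (cases i) auto
qed auto

lemma wk_append1: "wk R (xs @ ys) \<Longrightarrow> wk R xs"
  by (induction R xs rule: wk.induct) auto

lemma wk_snoc: "wk R p \<Longrightarrow> p \<noteq> [] \<Longrightarrow> R (last p) z \<Longrightarrow> wk R (p @ [z])"
  by (induction R p rule: wk.induct) auto

lemma path_exists: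
  assumes "R\<^sup>*\<^sup>* a b"
  shows "\<exists>p. wk R p \<and> distinct p \<and> p \<noteq> [] \<and> hd p = a \<and> last p = b"
  using assms
proof (induction rule: rtranclp_induct)
  case base
  then show ?case by (intro exI[of _ "[a]"]) auto
next
  case (step y z)
  then obtain p where p: "wk R p" "distinct p" "p \<noteq> []" "hd p = a" "last p = y" by blast
  show ?case
  proof (cases "z \<in> set p")
    case True
    then obtain xs ys where xs: "p = xs @ z # ys" by (meson split_list)
    have "wk R (xs @ [z])" using p(1) xs wk_append1[of R "xs @ [z]" ys] by simp
    moreover have "distinct (xs @ [z])" using p(2) xs by simp
    moreover have "hd (xs @ [z]) = a" using p(4) xs by (cases xs) auto
    ultimately show ?thesis by (intro exI[of _ "xs @ [z]"]) auto
  next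
    case False
    then show ?thesis using p step(2) wk_snoc[of R p z]
      by (intro exI[of _ "p @ [z]"]) (auto simp: hd_append)
  qed
qed

lemma three_low:
  assumes sym: "\<And>u v. R u v \<Longrightarrow> R v u"
    and fin: "\<And>v. finite {u. R v u}"
    and deg: "\<And>v. card {u. R v u} \<le> 2"
    and ab: "R\<^sup>*\<^sup>* a b" and ac: "R\<^sup>*\<^sup>* a c"
    and d: "a \<noteq> b" "a \<noteq> c" "b \<noteq> c"
    and la: "card {u. R a u} \<le> 1" and lb: "card {u. R b u} \<le> 1" and lc: "card {u. R c u} \<le> 1"
  shows False
proof -
  obtain p where p: "wk R p" "distinct p" "p \<noteq> []" "hd p = a" "last p = b"
    using path_exists[OF ab] by blast
  define n where "n = length p"
  have p0: "p!0 = a" using p by (simp add: hd_conv_nth)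
  have pl: "p!(n-1) = b" using p by (simp add: last_conv_nth n_def)
  have n2: "n \<ge> 2"
  proof (rule ccontr)
    assume "\<not> n \<ge> 2"
    then have "n = 1" using p(3) n_def by (cases p) (auto simp: not_le)
    then show False using p0 pl d by simp
  qed
  have internal: "R (p!i) (p!(i-1)) \<and> R (p!i) (p!Suc i) \<and> p!(i-1) \<noteq> p!Suc i"
    if "0 < i" "Suc i < n" for i
  proof -
    have "R (p!(i-1)) (p!i)" using wk_nth[OF p(1), of "i-1"] that n_def by simp
    moreover have "R (p!i) (p!Suc i)" using wk_nth[OF p(1), of i] that n_def by simp
    moreover have "p!(i-1) \<noteq> p!Suc i" using p(2) that n_def nth_eq_iff_index_eq[of p "i-1" "Suc i"] by simp
    ultimately show ?thesis using sym by blast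
  qed
  have closed: "u \<in> set p" if hi: "i < n" and hr: "R (p!i) u" for i u
  proof -
    consider "i = 0" | "i = n - 1" | "0 < i \<and> Suc i < n" using hi n2 by linarith
    then show ?thesis
    proof cases
      case 1
      have r: "R a (p!1)" using wk_nth[OF p(1), of 0] n2 p0 n_def by simp
      have "\<forall>a1\<in>{u. R a u}. \<forall>a2\<in>{u. R a u}. a1 = a2" using la card_le_Suc0_iff_eq[OF fin] by simp
      then have "u = p!1" using r hr 1 p0 by blast
      then show ?thesis using n2 n_def by simp
    next
      case 2
      have e: "Suc (n-2) = n-1" using n2 by simp
      have "R (p!(n-2)) (p!Suc (n-2))" using wk_nth[OF p(1), of "n-2"] n2 n_def by simp
      then have r: "R b (p!(n-2))" using e pl sym by simp
      have "\<forall>a1\<in>{u. R b u}. \<forall>a2\<in>{u. R b u}. a1 = a2" using lb card_le_Suc0_iff_eq[OF fin] by simp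
      then have "u = p!(n-2)" using r hr 2 pl by blast
      then show ?thesis using n2 n_def by simp
    next
      case 3
      then have I: "R (p!i) (p!(i-1))" "R (p!i) (p!Suc i)" "p!(i-1) \<noteq> p!Suc i" using internal by auto
      have sub: "{p!(i-1), p!Suc i} \<subseteq> {u. R (p!i) u}" using I by auto
      have "card {p!(i-1), p!Suc i} = 2" using I(3) by simp
      then have "{p!(i-1), p!Suc i} = {u. R (p!i) u}" using card_seteq[OF fin sub] deg by simp
      then have "u = p!(i-1) \<or> u = p!Suc i" using hr by blast
      moreover have "p!(i-1) \<in> set p" "p!Suc i \<in> set p" using 3 n_def by auto
      ultimately show ?thesis by blast
    qed
  qed
  have "c \<in> set p" using ac
  proof (induction rule: rtranclp_induct)
    case base then show ?case using p(3) p0 nth_mem[of 0 p] by auto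
  next
    case (step y z)
    then obtain i where "i < n" "p!i = y" using n_def by (metis in_set_conv_nth)
    then show ?case using closed step(2) by blast
  qed
  then obtain j where j: "j < n" "p!j = c" using n_def by (metis in_set_conv_nth)
  have "j \<noteq> 0" using j p0 d(2) by (metis)
  moreover have "j \<noteq> n - 1" using j pl d(3) by metis
  ultimately have "0 < j" "Suc j < n" using j by linarith+
  then have I: "R c (p!(j-1))" "R c (p!Suc j)" "p!(j-1) \<noteq> p!Suc j" using internal j by auto
  have "card {p!(j-1), p!Suc j} \<le> card {u. R c u}" using I by (intro card_mono[OF fin]) auto
  then show False using I(3) lc by simp
qed

definition used :: "'e set \<Rightarrow> ('e \<Rightarrow> 'v set) \<Rightarrow> ('e \<Rightarrow> nat) \<Rightarrow> 'v \<Rightarrow> nat set" where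
  "used F ends c v = c ` {e\<in>F. v \<in> ends e}"

definition proper :: "nat set \<Rightarrow> 'e set \<Rightarrow> ('e \<Rightarrow> 'v set) \<Rightarrow> ('e \<Rightarrow> nat) \<Rightarrow> bool" where
  "proper C F ends c \<longleftrightarrow> (\<forall>e\<in>F. c e \<in> C) \<and>
     (\<forall>e\<in>F. \<forall>f\<in>F. e \<noteq> f \<and> ends e \<inter> ends f \<noteq> {} \<longrightarrow> c e \<noteq> c f)"

lemma two_other: assumes "card S = 2" "v \<in> S" shows "\<exists>u. S = {v,u} \<and> u \<noteq> v"
proof -
  obtain x y where xy: "S = {x,y}" "x \<noteq> y" using card_2_iff[THEN iffD1, OF assms(1)] by blast
  show ?thesis
  proof (cases "v = x")
    case True then show ?thesis using xy by blast
  next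
    case False then have "v = y" using xy assms(2) by blast
    then show ?thesis using xy by (intro exI[of _ x]) auto
  qed
qed

lemma uniq_nb:
  assumes pr: "proper C F ends c" and two: "\<forall>e\<in>F. card (ends e) = 2"
    and e1: "e1 \<in> F" "ends e1 = {v,u1}" and e2: "e2 \<in> F" "ends e2 = {v,u2}" and col: "c e1 = c e2"
  shows "u1 = u2"
proof -
  have "v \<in> ends e1 \<inter> ends e2" using e1 e2 by simp
  then have "ends e1 \<inter> ends e2 \<noteq> {}" by blast
  moreover have P: "\<forall>e\<in>F. \<forall>f\<in>F. e \<noteq> f \<and> ends e \<inter> ends f \<noteq> {} \<longrightarrow> c e \<noteq> c f"
    using pr unfolding proper_def by (rule conjunct2)
  ultimately have "e1 = e2" using e1(1) e2(1) col by blast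
  then have eq: "{v,u1} = {v,u2}" using e1(2) e2(2) by metis
  have c1: "card {v,u1} = 2" using two e1(1) e1(2) by metis
  have c2: "card {v,u2} = 2" using two e2(1) e2(2) by metis
  have "u1 \<noteq> v" using c1 by (cases "u1 = v") simp_all
  moreover have "u2 \<noteq> v" using c2 by (cases "u2 = v") simp_all
  ultimately show ?thesis using eq by (simp add: doubleton_eq_iff)
qed

lemma kempe:
  assumes fin: "finite F" and two: "\<forall>e\<in>F. card (ends e) = 2"
    and pr: "proper C F ends c" and ab: "\<alpha> \<noteq> \<beta>" "\<alpha> \<in> C" "\<beta> \<in> C"
    and za: "\<alpha> \<notin> used F ends c z"
  shows "\<exists>c'. proper C F ends c' \<and> \<beta> \<notin> used F ends c' z \<and>
     (\<forall>w1 w2. w1 \<noteq> z \<longrightarrow> w2 \<noteq> z \<longrightarrow> \<beta> \<in> used F ends c w1 \<longrightarrow> \<beta> \<notin> used F ends c' w1 \<longrightarrow>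
         \<beta> \<in> used F ends c w2 \<longrightarrow> \<beta> \<notin> used F ends c' w2 \<longrightarrow> w1 = w2)"
proof -
  define H where "H = {e\<in>F. c e = \<alpha> \<or> c e = \<beta>}"
  define R where "R = (\<lambda>u v. \<exists>e\<in>H. ends e = {u,v})"
  define K where "K = {v. R\<^sup>*\<^sup>* z v}"
  define sw where "sw = (\<lambda>e. e \<in> H \<and> ends e \<subseteq> K)"
  define c' where "c' = (\<lambda>e. if sw e then (if c e = \<alpha> then \<beta> else \<alpha>) else c e)"
  have zK: "z \<in> K" unfolding K_def by simp
  have closedK: "sw e" if eH: "e \<in> H" and vE: "v \<in> ends e" and vK: "v \<in> K" for e v
  proof -
    have eF: "e \<in> F" using eH unfolding H_def by blast
    have "card (ends e) = 2" using two eF by blast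
    then obtain u where u: "ends e = {v,u}" using two_other[OF _ vE] by blast
    then have "R v u" unfolding R_def using eH by blast
    moreover have "R\<^sup>*\<^sup>* z v" using vK unfolding K_def by blast
    ultimately have "R\<^sup>*\<^sup>* z u" by (rule rtranclp.rtrancl_into_rtrancl[rotated])
    then have "u \<in> K" unfolding K_def by blast
    then have "ends e \<subseteq> K" unfolding u using vK by blast
    then show ?thesis unfolding sw_def using eH by blast
  qed
  have prc': "proper C F ends c'"
    unfolding proper_def
  proof (intro conjI ballI impI)
    fix e assume "e \<in> F" then show "c' e \<in> C" using pr ab unfolding c'_def proper_def by auto
  next
    fix e f assume ef: "e \<in> F" "f \<in> F" "e \<noteq> f \<and> ends e \<inter> ends f \<noteq> {}"
    then have ne: "c e \<noteq> c f" using pr unfolding proper_def by blast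
    obtain v where v: "v \<in> ends e" "v \<in> ends f" using ef by blast
    show "c' e \<noteq> c' f"
    proof (cases "sw e")
      case True
      show ?thesis
      proof (cases "sw f")
        case True
        then show ?thesis using \<open>sw e\<close> ne unfolding c'_def sw_def H_def by auto
      next
        case False
        have "v \<in> K" using True v unfolding sw_def by blast
        then have "f \<notin> H" using closedK v False by blast
        then show ?thesis using True False ef unfolding c'_def H_def by auto
      qed
    next
      case False
      show ?thesis
      proof (cases "sw f")
        case True
        have "v \<in> K" using True v unfolding sw_def by blast
        then have "e \<notin> H" using closedK v False by blast
        then show ?thesis using True False ef unfolding c'_def H_def by auto
      next
        case False
        then show ?thesis using \<open>\<not> sw e\<close> ne unfolding c'_def by auto
      qed
    qed
  qed
  have zb: "\<beta> \<notin> used F ends c' z"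
  proof
    assume "\<beta> \<in> used F ends c' z"
    then obtain e where e: "e \<in> F" "z \<in> ends e" "c' e = \<beta>" unfolding used_def by auto
    show False
    proof (cases "sw e")
      case True
      then have "c e = \<alpha>" using e(3) ab unfolding c'_def by (auto split: if_splits)
      then show False using za e unfolding used_def by auto
    next
      case False
      then have "c e = \<beta>" using e(3) unfolding c'_def by simp
      then have "e \<in> H" using e H_def by simp
      then show False using closedK[OF _ e(2) zK] False by blast
    qed
  qed
  have Rsym: "R u v \<Longrightarrow> R v u" for u v unfolding R_def by (auto simp: insert_commute)
  have nb_sub: "{u. R v u} \<subseteq> {u. \<exists>e\<in>F. ends e = {v,u} \<and> c e = \<alpha>} \<union> {u. \<exists>e\<in>F. ends e = {v,u} \<and> c e = \<beta>}" for v
    unfolding R_def H_def by auto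
  have one_col: "card {u. \<exists>e\<in>F. ends e = {v,u} \<and> c e = \<gamma>} \<le> 1 \<and> finite {u. \<exists>e\<in>F. ends e = {v,u} \<and> c e = \<gamma>}" for v \<gamma>
  proof -
    let ?S = "{u. \<exists>e\<in>F. ends e = {v,u} \<and> c e = \<gamma>}"
    have eq: "\<And>u1 u2. u1 \<in> ?S \<Longrightarrow> u2 \<in> ?S \<Longrightarrow> u1 = u2"
      using uniq_nb[OF pr two] by blast
    show ?thesis
    proof (cases "?S = {}")
      case True then show ?thesis by (simp only: card.empty finite.emptyI) simp
    next
      case False then obtain u where u: "u \<in> ?S" by blast
      then have sub: "?S \<subseteq> {u}" using eq by blast
      have "finite ?S" using finite_subset[OF sub] by simp
      moreover have "card ?S \<le> card {u}" using card_mono[OF _ sub] by simp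
      ultimately show ?thesis by simp
    qed
  qed
  have finU: "finite ({u. \<exists>e\<in>F. ends e = {v,u} \<and> c e = \<alpha>} \<union> {u. \<exists>e\<in>F. ends e = {v,u} \<and> c e = \<beta>})" for v
    using one_col[of v \<alpha>] one_col[of v \<beta>] by (simp only: finite_Un)
  have finnb: "finite {u. R v u}" for v
    by (rule finite_subset[OF nb_sub finU])
  have degnb: "card {u. R v u} \<le> 2" for v
  proof -
    have "card {u. R v u} \<le> card ({u. \<exists>e\<in>F. ends e = {v,u} \<and> c e = \<alpha>} \<union> {u. \<exists>e\<in>F. ends e = {v,u} \<and> c e = \<beta>})"
      by (rule card_mono[OF finU nb_sub])
    also have "\<dots> \<le> card {u. \<exists>e\<in>F. ends e = {v,u} \<and> c e = \<alpha>} + card {u. \<exists>e\<in>F. ends e = {v,u} \<and> c e = \<beta>}"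
      by (rule card_Un_le)
    also have "\<dots> \<le> 2" using one_col[of v \<alpha>] one_col[of v \<beta>] by linarith
    finally show ?thesis .
  qed
  have lowa: "card {u. R v u} \<le> 1" if "\<alpha> \<notin> used F ends c v" for v
  proof -
    have sub: "{u. R v u} \<subseteq> {u. \<exists>e\<in>F. ends e = {v,u} \<and> c e = \<beta>}"
    proof
      fix u assume "u \<in> {u. R v u}"
      then obtain e where e: "e \<in> H" "ends e = {v,u}" unfolding R_def by blast
      then have "e \<in> F" "c e = \<alpha> \<or> c e = \<beta>" unfolding H_def by blast+
      moreover have "c e \<noteq> \<alpha>"
      proof
        assume "c e = \<alpha>"
        then have "\<alpha> \<in> used F ends c v" unfolding used_def using \<open>e \<in> F\<close> e(2) by blast
        then show False using that by blast
      qed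
      ultimately show "u \<in> {u. \<exists>e\<in>F. ends e = {v,u} \<and> c e = \<beta>}" using e(2) by blast
    qed
    have "card {u. R v u} \<le> card {u. \<exists>e\<in>F. ends e = {v,u} \<and> c e = \<beta>}"
      using card_mono[OF _ sub] one_col[of v \<beta>] by blast
    then show ?thesis using one_col[of v \<beta>] by linarith
  qed
  have main: "w1 = w2" if w: "w1 \<noteq> z" "w2 \<noteq> z" "\<beta> \<in> used F ends c w1" "\<beta> \<notin> used F ends c' w1"
     "\<beta> \<in> used F ends c w2" "\<beta> \<notin> used F ends c' w2" for w1 w2
  proof (rule ccontr)
    assume ne: "w1 \<noteq> w2"
    have inK: "w \<in> K \<and> \<alpha> \<notin> used F ends c w" if s1: "\<beta> \<in> used F ends c w" and s2: "\<beta> \<notin> used F ends c' w" for w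
    proof
      obtain f where f: "f \<in> F" "w \<in> ends f" "c f = \<beta>" using s1 unfolding used_def by auto
      have "sw f"
      proof (rule ccontr)
        assume "\<not> sw f" then have "c' f = \<beta>" using f unfolding c'_def by simp
        then show False using s2 f unfolding used_def by auto
      qed
      then show wK: "w \<in> K" using f unfolding sw_def by blast
      show "\<alpha> \<notin> used F ends c w"
      proof
        assume "\<alpha> \<in> used F ends c w"
        then obtain e where e: "e \<in> F" "w \<in> ends e" "c e = \<alpha>" unfolding used_def by auto
        then have "e \<in> H" unfolding H_def by simp
        then have "sw e" using closedK e wK by blast
        then have "c' e = \<beta>" using e unfolding c'_def by simp
        then show False using s2 e unfolding used_def by auto
      qed
    qed
    have a1: "w1 \<in> K" "\<alpha> \<notin> used F ends c w1" using inK w by auto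
    have a2: "w2 \<in> K" "\<alpha> \<notin> used F ends c w2" using inK w by auto
    have r1: "R\<^sup>*\<^sup>* z w1" using a1 K_def by simp
    have r2: "R\<^sup>*\<^sup>* z w2" using a2 K_def by simp
    have d1: "z \<noteq> w1" "z \<noteq> w2" using w(1,2) by auto
    show False
      by (rule three_low[of R z w1 w2, OF Rsym finnb degnb r1 r2 d1 ne lowa[OF za] lowa[OF a1(2)] lowa[OF a2(2)]])
  qed
  show ?thesis using prc' zb main by blast
qed

definition vl :: "'e set \<Rightarrow> ('e \<Rightarrow> 'v set) \<Rightarrow> 'v \<Rightarrow> 'v \<Rightarrow> nat" where
  "vl F ends x w = mg_degree F ends w + mg_mult F ends x w"

lemma two_elems: assumes "card S = 2" "x \<in> S" "w \<in> S" "x \<noteq> w" shows "S = {x,w}"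
proof -
  obtain u where u: "S = {x,u}" "u \<noteq> x" using two_other[OF assms(1,2)] by blast
  then have "w = u" using assms(3,4) by blast
  then show ?thesis using u by simp
qed

lemma deg_split:
  assumes fin: "finite F" and two: "\<forall>e\<in>F. card (ends e) = 2" and wx: "w \<noteq> x"
  shows "mg_degree F ends w = card {e\<in>{e\<in>F. x \<notin> ends e}. w \<in> ends e} + mg_mult F ends x w"
proof -
  let ?A = "{e\<in>{e\<in>F. x \<notin> ends e}. w \<in> ends e}"
  let ?B = "{e\<in>F. ends e = {x,w}}"
  have eq: "{e\<in>F. w \<in> ends e} = ?A \<union> ?B"
  proof (rule set_eqI)
    fix e
    show "e \<in> {e\<in>F. w \<in> ends e} \<longleftrightarrow> e \<in> ?A \<union> ?B"
    proof
      assume e: "e \<in> {e\<in>F. w \<in> ends e}"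
      show "e \<in> ?A \<union> ?B"
      proof (cases "x \<in> ends e")
        case True
        have "card (ends e) = 2" using e two by blast
        then have "ends e = {x,w}" using two_elems[of "ends e" x w] True e wx by blast
        then show ?thesis using e by blast
      next
        case False then show ?thesis using e by blast
      qed
    next
      assume "e \<in> ?A \<union> ?B" then show "e \<in> {e\<in>F. w \<in> ends e}" by blast
    qed
  qed
  have disj: "?A \<inter> ?B = {}" by blast
  have "card (?A \<union> ?B) = card ?A + card ?B"
    by (rule card_Un_disjoint) (use fin disj in auto)
  then show ?thesis unfolding mg_degree_def mg_mult_def eq by simp
qed

lemma card_used:
  assumes fin: "finite F0" and pr: "proper C F0 ends c"
  shows "card (used F0 ends c w) = card {e\<in>F0. w \<in> ends e}" "used F0 ends c w \<subseteq> C"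
proof -
  have P: "\<forall>e\<in>F0. \<forall>f\<in>F0. e \<noteq> f \<and> ends e \<inter> ends f \<noteq> {} \<longrightarrow> c e \<noteq> c f"
    using pr unfolding proper_def by (rule conjunct2)
  have "inj_on c {e\<in>F0. w \<in> ends e}"
  proof (rule inj_onI)
    fix e f assume "e \<in> {e\<in>F0. w \<in> ends e}" "f \<in> {e\<in>F0. w \<in> ends e}" "c e = c f"
    then show "e = f" using P by blast
  qed
  then show "card (used F0 ends c w) = card {e\<in>F0. w \<in> ends e}"
    unfolding used_def by (rule card_image)
  show "used F0 ends c w \<subseteq> C" using pr unfolding used_def proper_def by blast
qed

lemma Mid:
  assumes fin: "finite F" and two: "\<forall>e\<in>F. card (ends e) = 2" and finC: "finite C"
    and pr: "proper C {e\<in>F. x \<notin> ends e} ends c" and wx: "w \<noteq> x"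
  shows "card (C - used {e\<in>F. x \<notin> ends e} ends c w) + vl F ends x w = card C + 2 * mg_mult F ends x w"
proof -
  let ?F0 = "{e\<in>F. x \<notin> ends e}"
  let ?U = "used ?F0 ends c w"
  have fin0: "finite ?F0" using fin by simp
  have cu: "card ?U = card {e\<in>?F0. w \<in> ends e}" "?U \<subseteq> C" using card_used[OF fin0 pr] by auto
  have "card (C - ?U) = card C - card ?U" using cu(2) finC by (simp add: card_Diff_subset finite_subset)
  moreover have "card ?U \<le> card C" using cu(2) finC by (simp add: card_mono)
  moreover have "mg_degree F ends w = card {e\<in>?F0. w \<in> ends e} + mg_mult F ends x w"
    using deg_split[OF fin two wx] by simp
  ultimately show ?thesis unfolding vl_def using cu(1) by linarith
qed

lemma sum_mult:
  fixes F :: "'e set" and ends :: "'e \<Rightarrow> 'v set" and T :: "'v set"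
  assumes fin: "finite F" and finT: "finite T"
  shows "(\<Sum>w\<in>T. mg_mult F ends x w) \<le> mg_degree F ends x"
proof -
  let ?B = "\<lambda>w. {e\<in>F. ends e = {x,w}}"
  have "(\<Sum>w\<in>T. card (?B w)) = card (\<Union>w\<in>T. ?B w)"
  proof (rule card_UN_disjoint[symmetric])
    show "finite T" by (rule finT)
    show "\<forall>i\<in>T. finite (?B i)" using fin by simp
    show "\<forall>i\<in>T. \<forall>j\<in>T. i \<noteq> j \<longrightarrow> ?B i \<inter> ?B j = {}"
    proof (intro ballI impI)
      fix i j :: 'v assume "i \<in> T" "j \<in> T" "i \<noteq> j"
      show "?B i \<inter> ?B j = {}"
      proof (rule ccontr)
        assume "?B i \<inter> ?B j \<noteq> {}"
        then obtain e where "ends e = {x,i}" "ends e = {x,j}" by blast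
        then have "{x,i} = {x,j}" by simp
        then have "i = j" by (auto simp: doubleton_eq_iff)
        then show False using \<open>i \<noteq> j\<close> by simp
      qed
    qed
  qed
  also have "\<dots> \<le> card {e\<in>F. x \<in> ends e}"
    by (rule card_mono) (use fin in auto)
  finally show ?thesis unfolding mg_mult_def mg_degree_def .
qed

lemma dcount:
  assumes "finite A" "finite B"
  shows "(\<Sum>a\<in>A. card {b\<in>B. P a b}) = (\<Sum>b\<in>B. card {a\<in>A. P a b})"
proof -
  have 1: "card {b\<in>B. P a b} = (\<Sum>b\<in>B. if P a b then 1 else 0)" for a
    using assms(2) by (simp add: sum.If_cases Int_def)
  have 2: "card {a\<in>A. P a b} = (\<Sum>a\<in>A. if P a b then 1 else 0)" for b
    using assms(1) by (simp add: sum.If_cases Int_def)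
  show ?thesis unfolding 1 2 by (rule sum.swap)
qed

definition Qc :: "'e set \<Rightarrow> ('e \<Rightarrow> 'v set) \<Rightarrow> 'v \<Rightarrow> nat set \<Rightarrow> ('e \<Rightarrow> nat) \<Rightarrow> 'v \<Rightarrow> nat \<Rightarrow> bool" where
  "Qc F ends x C c z \<alpha> \<longleftrightarrow> (\<forall>w. 0 < mg_mult F ends x w \<longrightarrow> w \<noteq> z \<longrightarrow> card C \<le> vl F ends x w \<longrightarrow>
      \<alpha> \<notin> used {e\<in>F. x \<notin> ends e} ends c w \<longrightarrow>
      (vl F ends x w = card C \<and> (\<forall>w'. 0 < mg_mult F ends x w' \<longrightarrow> w' \<noteq> z \<longrightarrow> w' \<noteq> w \<longrightarrow>
          vl F ends x w' \<le> card C \<and> (card C \<le> vl F ends x w' \<longrightarrow> \<alpha> \<in> used {e\<in>F. x \<notin> ends e} ends c w'))))"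

lemma mult_edge: "0 < mg_mult F ends x w \<Longrightarrow> finite F \<Longrightarrow> \<exists>e\<in>F. ends e = {x,w}"
proof -
  assume a: "0 < mg_mult F ends x w"
  have "{e\<in>F. ends e = {x,w}} \<noteq> {}"
  proof
    assume "{e\<in>F. ends e = {x,w}} = {}"
    then have "mg_mult F ends x w = 0" unfolding mg_mult_def by (simp only: card.empty)
    then show False using a by simp
  qed
  then show ?thesis by blast
qed

lemma mult_ne: assumes "0 < mg_mult F ends x w" "finite F" "\<forall>e\<in>F. card (ends e) = 2" shows "w \<noteq> x"
proof
  assume "w = x"
  obtain e where e: "e \<in> F" "ends e = {x,w}" using mult_edge[OF assms(1,2)] by blast
  have "card {x,w} = 2" using assms(3) e by metis
  moreover have "card {x,w} = 1" using \<open>w = x\<close> by simp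
  ultimately show False by simp
qed

lemma key:
  fixes F :: "'e set" and ends :: "'e \<Rightarrow> 'v set"
  assumes fin: "finite F" and two: "\<forall>e\<in>F. card (ends e) = 2" and finC: "finite C"
    and pr: "proper C {e\<in>F. x \<notin> ends e} ends c"
    and dx: "mg_degree F ends x \<le> card C" and dpos: "0 < mg_degree F ends x"
    and h1: "\<forall>z. 0 < mg_mult F ends x z \<longrightarrow> vl F ends x z \<le> card C + 1"
    and h2: "\<forall>z z'. 0 < mg_mult F ends x z \<longrightarrow> 0 < mg_mult F ends x z' \<longrightarrow> z \<noteq> z' \<longrightarrow>
               vl F ends x z \<le> card C \<or> vl F ends x z' \<le> card C"
  shows "\<exists>c1 z \<alpha>. proper C {e\<in>F. x \<notin> ends e} ends c1 \<and> 0 < mg_mult F ends x z \<and> \<alpha> \<in> C \<and>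
     \<alpha> \<notin> used {e\<in>F. x \<notin> ends e} ends c1 z \<and> Qc F ends x C c1 z \<alpha>"
proof -
  define F0 where "F0 = {e\<in>F. x \<notin> ends e}"
  define k where "k = card C"
  define N where "N = {w. 0 < mg_mult F ends x w}"
  define T where "T = {w\<in>N. k \<le> vl F ends x w}"
  have fin0: "finite F0" using fin F0_def by simp
  have two0: "\<forall>e\<in>F0. card (ends e) = 2" using two F0_def by simp
  have Nx: "w \<noteq> x" if "w \<in> N" for w proof -
    have "0 < mg_mult F ends x w" using that unfolding N_def by simp
    then show ?thesis using mult_ne[OF _ fin two] by blast
  qed
  have finN: "finite N"
  proof -
    have sub: "N \<subseteq> \<Union>(ends ` F)"
    proof
      fix w assume wN: "w \<in> N"
      have m: "0 < mg_mult F ends x w" using wN unfolding N_def mem_Collect_eq .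
      obtain e where e: "e \<in> F" "ends e = {x,w}" using mult_edge[OF m fin] by blast
      have "w \<in> ends e" unfolding e(2) by (rule insertI2, rule singletonI)
      then show "w \<in> \<Union>(ends ` F)" using e(1) by (rule UN_I[rotated])
    qed
    have "\<forall>e\<in>F. finite (ends e)"
    proof
      fix e assume "e \<in> F" then have "card (ends e) = 2" using two by blast
      then show "finite (ends e)" by (intro card_ge_0_finite) simp
    qed
    then have "finite (\<Union>(ends ` F))" using fin by (intro finite_UN_I) simp_all
    then show ?thesis using sub by (rule finite_subset[rotated])
  qed
  have finT: "finite T" using finN T_def by simp
  have TN: "T \<subseteq> N" using T_def by blast
  have mid: "card (C - used F0 ends c' w) + vl F ends x w = k + 2 * mg_mult F ends x w"
    if "proper C F0 ends c'" "w \<in> N" for c' w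
  proof -
    have "w \<noteq> x" using Nx that(2) by blast
    moreover have "proper C {e\<in>F. x \<notin> ends e} ends c'" using that(1) unfolding F0_def .
    ultimately show ?thesis using Mid[OF fin two finC, of x c' w] unfolding F0_def k_def by blast
  qed
  have SI: "Qc F ends x C c' z \<alpha>" if "{w\<in>T-{z}. \<alpha> \<notin> used F0 ends c' w} = {}" for c' z \<alpha>
    unfolding Qc_def
  proof (intro allI impI, goal_cases)
    case (1 w)
    then have "w \<in> {w\<in>T-{z}. \<alpha> \<notin> used F0 ends c' w}" unfolding T_def N_def F0_def k_def by blast
    then have False using that by blast
    then show ?case by blast
  qed
  have SII: "Qc F ends x C c' z \<alpha>"
    if c1: "card {w\<in>T-{z}. \<alpha> \<notin> used F0 ends c' w} \<le> 1" and c2: "\<forall>w\<in>T. vl F ends x w = k+1 \<longrightarrow> w = z"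
    for c' z \<alpha>
    unfolding Qc_def
  proof (intro allI impI)
    fix w assume w: "0 < mg_mult F ends x w" "w \<noteq> z" "card C \<le> vl F ends x w"
      "\<alpha> \<notin> used {e\<in>F. x \<notin> ends e} ends c' w"
    have wT: "w \<in> T" using w unfolding T_def N_def k_def by blast
    have fS: "finite {w\<in>T-{z}. \<alpha> \<notin> used F0 ends c' w}" using finT by simp
    have one: "\<forall>a\<in>{w\<in>T-{z}. \<alpha> \<notin> used F0 ends c' w}. \<forall>b\<in>{w\<in>T-{z}. \<alpha> \<notin> used F0 ends c' w}. a = b"
      using c1 card_le_Suc0_iff_eq[OF fS] by simp
    have "vl F ends x w \<le> k + 1" using h1 w(1) k_def by blast
    moreover have "vl F ends x w \<noteq> k + 1" using c2 wT w(2) by blast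
    ultimately have v1: "vl F ends x w = card C" using w(3) k_def by linarith
    have v2: "vl F ends x w' \<le> card C \<and> (card C \<le> vl F ends x w' \<longrightarrow> \<alpha> \<in> used {e\<in>F. x \<notin> ends e} ends c' w')"
      if w': "0 < mg_mult F ends x w'" "w' \<noteq> z" "w' \<noteq> w" for w'
    proof
      have "vl F ends x w' \<le> k + 1" using h1 w'(1) k_def by blast
      moreover have "vl F ends x w' \<noteq> k + 1" using c2 w' unfolding T_def N_def by force
      ultimately show "vl F ends x w' \<le> card C" using k_def by linarith
      show "card C \<le> vl F ends x w' \<longrightarrow> \<alpha> \<in> used {e\<in>F. x \<notin> ends e} ends c' w'"
      proof
        assume "card C \<le> vl F ends x w'"
        then have "w' \<in> T" using w' unfolding T_def N_def k_def by blast
        show "\<alpha> \<in> used {e\<in>F. x \<notin> ends e} ends c' w'"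
        proof (rule ccontr)
          assume "\<alpha> \<notin> used {e\<in>F. x \<notin> ends e} ends c' w'"
          then have "w' \<in> {w\<in>T-{z}. \<alpha> \<notin> used F0 ends c' w}" using \<open>w' \<in> T\<close> w' F0_def by blast
          moreover have "w \<in> {w\<in>T-{z}. \<alpha> \<notin> used F0 ends c' w}" using wT w F0_def by blast
          ultimately show False using one w'(3) by blast
        qed
      qed
    qed
    show "vl F ends x w = card C \<and> (\<forall>w'. 0 < mg_mult F ends x w' \<longrightarrow> w' \<noteq> z \<longrightarrow> w' \<noteq> w \<longrightarrow>
          vl F ends x w' \<le> card C \<and> (card C \<le> vl F ends x w' \<longrightarrow> \<alpha> \<in> used {e\<in>F. x \<notin> ends e} ends c' w'))"
      using v1 v2 by blast
  qed
  have prF0: "proper C F0 ends c" using pr F0_def by simp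
  show ?thesis
  proof (cases "T = {}")
    case True
    have "{e\<in>F. x \<in> ends e} \<noteq> {}"
    proof
      assume "{e\<in>F. x \<in> ends e} = {}"
      then have "mg_degree F ends x = 0" unfolding mg_degree_def by (simp only: card.empty)
      then show False using dpos by simp
    qed
    then obtain e where e: "e \<in> F" "x \<in> ends e" by blast
    have "card (ends e) = 2" using two e(1) by blast
    then obtain z where z: "ends e = {x,z}" using two_other[OF _ e(2)] by blast
    have zN: "z \<in> N"
    proof -
      have "e \<in> {e\<in>F. ends e = {x,z}}" using e z by blast
      then have "{e\<in>F. ends e = {x,z}} \<noteq> {}" by blast
      moreover have "finite {e\<in>F. ends e = {x,z}}" using fin by simp
      ultimately have "card {e\<in>F. ends e = {x,z}} > 0" by (simp only: card_gt_0_iff) simp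
      then show ?thesis unfolding N_def mg_mult_def by simp
    qed
    have "z \<notin> T" using True by blast
    then have "vl F ends x z < k" using zN T_def by simp
    then have "card (C - used F0 ends c z) > 0" using mid[OF prF0 zN] by linarith
    then obtain \<alpha> where \<alpha>: "\<alpha> \<in> C" "\<alpha> \<notin> used F0 ends c z" using card_gt_0_iff[of "C - used F0 ends c _"] by blast
    have "Qc F ends x C c z \<alpha>" using SI True by blast
    then show ?thesis using prF0 zN \<alpha> F0_def N_def by blast
  next
    case False
    obtain z1 where z1: "z1 \<in> T" "\<forall>w\<in>T. vl F ends x w = k+1 \<longrightarrow> w = z1"
    proof (cases "\<exists>y\<in>T. vl F ends x y = k+1")
      case True
      then obtain y where y: "y \<in> T" "vl F ends x y = k+1" by blast
      have "\<forall>w\<in>T. vl F ends x w = k+1 \<longrightarrow> w = y"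
      proof (intro ballI impI)
        fix w assume "w \<in> T" "vl F ends x w = k+1"
        then show "w = y" using h2 y unfolding T_def N_def k_def by force
      qed
      then show ?thesis using that y by blast
    next
      case False
      then show ?thesis using that \<open>T \<noteq> {}\<close> by blast
    qed
    have z1N: "z1 \<in> N" using z1 TN by blast
    show ?thesis
    proof (cases "\<exists>\<beta>\<in>C. \<forall>w\<in>T. \<beta> \<in> used F0 ends c w")
      case True
      then obtain \<beta> where \<beta>: "\<beta> \<in> C" "\<forall>w\<in>T. \<beta> \<in> used F0 ends c w" by blast
      have "vl F ends x z1 \<le> k + 1" using h1 z1N N_def k_def by blast
      moreover have "mg_mult F ends x z1 \<ge> 1" using z1N N_def by simp
      ultimately have "card (C - used F0 ends c z1) > 0" using mid[OF prF0 z1N] by linarith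
      then obtain \<alpha> where \<alpha>: "\<alpha> \<in> C" "\<alpha> \<notin> used F0 ends c z1" using card_gt_0_iff[of "C - used F0 ends c _"] by blast
      have ab: "\<alpha> \<noteq> \<beta>" using \<alpha> \<beta> z1 by blast
      obtain c' where c': "proper C F0 ends c'" "\<beta> \<notin> used F0 ends c' z1"
        "\<forall>w1 w2. w1 \<noteq> z1 \<longrightarrow> w2 \<noteq> z1 \<longrightarrow> \<beta> \<in> used F0 ends c w1 \<longrightarrow> \<beta> \<notin> used F0 ends c' w1 \<longrightarrow>
         \<beta> \<in> used F0 ends c w2 \<longrightarrow> \<beta> \<notin> used F0 ends c' w2 \<longrightarrow> w1 = w2"
        using kempe[OF fin0 two0 prF0 ab \<alpha>(1) \<beta>(1) \<alpha>(2)] by blast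
      have fS: "finite {w\<in>T-{z1}. \<beta> \<notin> used F0 ends c' w}" using finT by simp
      have "\<forall>a\<in>{w\<in>T-{z1}. \<beta> \<notin> used F0 ends c' w}. \<forall>b\<in>{w\<in>T-{z1}. \<beta> \<notin> used F0 ends c' w}. a = b"
        using c'(3) \<beta>(2) by blast
      then have "card {w\<in>T-{z1}. \<beta> \<notin> used F0 ends c' w} \<le> 1"
        using card_le_Suc0_iff_eq[OF fS] by simp
      then have "Qc F ends x C c' z1 \<beta>" using SII z1(2) by blast
      then show ?thesis using c' \<beta> z1N F0_def N_def by blast
    next
      case False
      then have allm: "\<forall>\<beta>\<in>C. \<exists>w\<in>T. \<beta> \<notin> used F0 ends c w" by blast
      show ?thesis
      proof (cases "\<exists>z\<in>T. \<exists>\<alpha>\<in>C. \<alpha> \<notin> used F0 ends c z \<and> {w\<in>T-{z}. \<alpha> \<notin> used F0 ends c w} = {}")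
        case True
        then obtain z \<alpha> where za: "z \<in> T" "\<alpha> \<in> C" "\<alpha> \<notin> used F0 ends c z" "{w\<in>T-{z}. \<alpha> \<notin> used F0 ends c w} = {}"
          by blast
        have "Qc F ends x C c z \<alpha>" using SI za(4) by blast
        then show ?thesis using za prF0 TN F0_def N_def by blast
      next
        case notI: False
        show ?thesis
        proof (cases "\<exists>z\<in>T. \<exists>\<alpha>\<in>C. \<alpha> \<notin> used F0 ends c z \<and> card {w\<in>T-{z}. \<alpha> \<notin> used F0 ends c w} \<le> 1
                       \<and> (\<forall>w\<in>T. vl F ends x w = k+1 \<longrightarrow> w = z)")
          case True
          then obtain z \<alpha> where za: "z \<in> T" "\<alpha> \<in> C" "\<alpha> \<notin> used F0 ends c z"
            "card {w\<in>T-{z}. \<alpha> \<notin> used F0 ends c w} \<le> 1" "\<forall>w\<in>T. vl F ends x w = k+1 \<longrightarrow> w = z"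
            by blast
          have "Qc F ends x C c z \<alpha>" using SII za(4,5) by blast
          then show ?thesis using za prF0 TN F0_def N_def by blast
        next
          case notII: False
          define S where "S = (\<Sum>\<alpha>\<in>C. card {w\<in>T. \<alpha> \<notin> used F0 ends c w})"
          have S_eq: "S = (\<Sum>w\<in>T. card (C - used F0 ends c w))"
          proof -
            have "S = (\<Sum>w\<in>T. card {\<alpha>\<in>C. \<alpha> \<notin> used F0 ends c w})"
              unfolding S_def by (rule dcount[OF finC finT, where P="\<lambda>\<alpha> w. \<alpha> \<notin> used F0 ends c w"])
            also have "\<dots> = (\<Sum>w\<in>T. card (C - used F0 ends c w))"
              by (rule sum.cong) (auto simp: set_diff_eq)
            finally show ?thesis .
          qed
          have pw: "card (C - used F0 ends c w) + (if vl F ends x w = k+1 then 1 else 0) \<le> 2 * mg_mult F ends x w"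
            if "w \<in> T" for w
          proof -
            have "w \<in> N" "k \<le> vl F ends x w" using that T_def by auto
            then show ?thesis using mid[OF prF0 \<open>w \<in> N\<close>] by auto
          qed
          have bound: "S + card {w\<in>T. vl F ends x w = k+1} \<le> 2 * k"
          proof -
            have "card {w\<in>T. vl F ends x w = k+1} = (\<Sum>w\<in>T. if vl F ends x w = k+1 then 1 else 0)"
              using finT by (simp add: sum.If_cases Int_def)
            then have "S + card {w\<in>T. vl F ends x w = k+1} =
                (\<Sum>w\<in>T. card (C - used F0 ends c w) + (if vl F ends x w = k+1 then 1 else 0))"
              unfolding S_eq by (simp add: sum.distrib)
            also have "\<dots> \<le> (\<Sum>w\<in>T. 2 * mg_mult F ends x w)" by (rule sum_mono) (use pw in blast)
            also have "\<dots> = 2 * (\<Sum>w\<in>T. mg_mult F ends x w)" by (simp add: sum_distrib_left)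
            also have "\<dots> \<le> 2 * k" using sum_mult[OF fin finT, where x=x and ends=ends] dx k_def by linarith
            finally show ?thesis .
          qed
          have ge2: "card {w\<in>T. \<alpha> \<notin> used F0 ends c w} \<ge> 2" if aC: "\<alpha> \<in> C" for \<alpha>
          proof -
            obtain z where z: "z \<in> T" "\<alpha> \<notin> used F0 ends c z" using allm aC by blast
            have ne: "{w\<in>T-{z}. \<alpha> \<notin> used F0 ends c w} \<noteq> {}"
            proof
              assume "{w\<in>T-{z}. \<alpha> \<notin> used F0 ends c w} = {}"
              then have "\<exists>z\<in>T. \<exists>\<alpha>\<in>C. \<alpha> \<notin> used F0 ends c z \<and> {w\<in>T-{z}. \<alpha> \<notin> used F0 ends c w} = {}"
                using z aC by blast
              then show False using notI by blast
            qed
            then obtain w where w: "w \<in> T" "w \<noteq> z" "\<alpha> \<notin> used F0 ends c w" by blast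
            have "{z,w} \<subseteq> {w\<in>T. \<alpha> \<notin> used F0 ends c w}" using z w by blast
            then have "card {z,w} \<le> card {w\<in>T. \<alpha> \<notin> used F0 ends c w}"
              by (rule card_mono[rotated]) (use finT in simp)
            then show ?thesis using w(2) by simp
          qed
          have kpos: "k \<ge> 1" using dx dpos k_def by linarith
          show ?thesis
          proof (cases "\<exists>y\<in>T. vl F ends x y = k+1")
            case True
            then obtain y where y: "y \<in> T" "vl F ends x y = k+1" by blast
            then have "{y} \<subseteq> {w\<in>T. vl F ends x w = k+1}" by blast
            then have "card {y} \<le> card {w\<in>T. vl F ends x w = k+1}"
              by (rule card_mono[rotated]) (use finT in simp)
            then have "card {w\<in>T. vl F ends x w = k+1} \<ge> 1" by simp
            moreover have "S \<ge> 2 * k"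
            proof -
              have "(\<Sum>\<alpha>\<in>C. 2) \<le> S" unfolding S_def by (rule sum_mono) (use ge2 in blast)
              then show ?thesis using k_def by simp
            qed
            ultimately show ?thesis using bound by linarith
          next
            case noY: False
            have ge3: "card {w\<in>T. \<alpha> \<notin> used F0 ends c w} \<ge> 3" if aC: "\<alpha> \<in> C" for \<alpha>
            proof -
              obtain z where z: "z \<in> T" "\<alpha> \<notin> used F0 ends c z" using allm aC by blast
              have vz: "\<forall>w\<in>T. vl F ends x w = k+1 \<longrightarrow> w = z" using noY by blast
              have c2: "card {w\<in>T-{z}. \<alpha> \<notin> used F0 ends c w} \<ge> 2"
              proof (rule ccontr)
                assume "\<not> card {w\<in>T-{z}. \<alpha> \<notin> used F0 ends c w} \<ge> 2"
                then have "card {w\<in>T-{z}. \<alpha> \<notin> used F0 ends c w} \<le> 1" by simp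
                then have "\<exists>z\<in>T. \<exists>\<alpha>\<in>C. \<alpha> \<notin> used F0 ends c z \<and> card {w\<in>T-{z}. \<alpha> \<notin> used F0 ends c w} \<le> 1
                       \<and> (\<forall>w\<in>T. vl F ends x w = k+1 \<longrightarrow> w = z)" using z aC vz by blast
                then show False using notII by blast
              qed
              have "{w\<in>T. \<alpha> \<notin> used F0 ends c w} = insert z {w\<in>T-{z}. \<alpha> \<notin> used F0 ends c w}" using z by blast
              moreover have "finite {w\<in>T-{z}. \<alpha> \<notin> used F0 ends c w}" using finT by simp
              ultimately have "card {w\<in>T. \<alpha> \<notin> used F0 ends c w} = Suc (card {w\<in>T-{z}. \<alpha> \<notin> used F0 ends c w})"
                by simp
              then show ?thesis using c2 by simp
            qed
            have "(\<Sum>\<alpha>\<in>C. 3) \<le> S" unfolding S_def by (rule sum_mono) (use ge3 in blast)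
            then have "S \<ge> 3 * k" using k_def by simp
            then show ?thesis using bound kpos by linarith
          qed
        qed
      qed
    qed
  qed
qed

lemma mult_mono: "F' \<subseteq> F \<Longrightarrow> finite F \<Longrightarrow> mg_mult F' ends x w \<le> mg_mult F ends x w"
  unfolding mg_mult_def by (rule card_mono) auto

lemma deg_mono: "F' \<subseteq> F \<Longrightarrow> finite F \<Longrightarrow> mg_degree F' ends w \<le> mg_degree F ends w"
  unfolding mg_degree_def by (rule card_mono) auto

lemma vizing_vertex:
  fixes F :: "'e set" and ends :: "'e \<Rightarrow> 'v set"
  assumes "mg_degree F ends x = n" "finite F" "\<forall>e\<in>F. card (ends e) = 2" "finite C"
    "proper C {e\<in>F. x \<notin> ends e} ends c" "mg_degree F ends x \<le> card C"
    "\<forall>z. 0 < mg_mult F ends x z \<longrightarrow> vl F ends x z \<le> card C + 1"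
    "\<forall>z z'. 0 < mg_mult F ends x z \<longrightarrow> 0 < mg_mult F ends x z' \<longrightarrow> z \<noteq> z' \<longrightarrow>
               vl F ends x z \<le> card C \<or> vl F ends x z' \<le> card C"
  shows "\<exists>c'. proper C F ends c'"
  using assms
proof (induction n arbitrary: F C c)
  case 0
  have "{e\<in>F. x \<in> ends e} = {}" using 0(1,2) unfolding mg_degree_def by simp
  then have "{e\<in>F. x \<notin> ends e} = F" by blast
  then show ?case using 0(5) by metis
next
  case (Suc n)
  note fin = Suc.prems(2) and two = Suc.prems(3) and finC = Suc.prems(4) and pr = Suc.prems(5)
    and dx = Suc.prems(6) and h1 = Suc.prems(7) and h2 = Suc.prems(8)
  have dpos: "0 < mg_degree F ends x" using Suc.prems(1) by simp
  obtain c1 z \<alpha> where K: "proper C {e\<in>F. x \<notin> ends e} ends c1" "0 < mg_mult F ends x z" "\<alpha> \<in> C"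
     "\<alpha> \<notin> used {e\<in>F. x \<notin> ends e} ends c1 z" "Qc F ends x C c1 z \<alpha>"
    using key[OF fin two finC pr dx dpos h1 h2] by blast
  define F0 where "F0 = {e\<in>F. x \<notin> ends e}"
  define A where "A = {e\<in>F0. c1 e = \<alpha>}"
  define s where "s = (\<lambda>w. if \<alpha> \<in> used F0 ends c1 w then 1 else (0::nat))"
  obtain e0 where e0: "e0 \<in> F" "ends e0 = {x,z}" using mult_edge[OF K(2) fin] by blast
  have zx: "z \<noteq> x" using mult_ne[OF K(2) fin two] .
  define F' where "F' = F - insert e0 A"
  define C' where "C' = C - {\<alpha>}"
  have pr1: "proper C F0 ends c1" using K(1) F0_def by simp
  have P1: "\<forall>e\<in>F0. \<forall>f\<in>F0. e \<noteq> f \<and> ends e \<inter> ends f \<noteq> {} \<longrightarrow> c1 e \<noteq> c1 f"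
    using pr1 unfolding proper_def by (rule conjunct2)
  have V1: "\<forall>e\<in>F0. c1 e \<in> C" using pr1 unfolding proper_def by (rule conjunct1)
  have Ax: "x \<notin> ends e" if "e \<in> A" for e using that unfolding A_def F0_def by blast
  have x_e0: "x \<in> ends e0" using e0(2) by simp
  have e0A: "e0 \<notin> A" using Ax x_e0 by blast
  have AF: "A \<subseteq> F" unfolding A_def F0_def by blast
  have finF': "finite F'" using fin F'_def by simp
  have twoF': "\<forall>e\<in>F'. card (ends e) = 2" using two F'_def by simp
  have finC': "finite C'" using finC C'_def by simp
  have kpos: "card C \<ge> 1" using dx dpos by linarith
  have cardC': "card C' = card C - 1" using K(3) finC unfolding C'_def by simp
  have F'0: "{e\<in>F'. x \<notin> ends e} \<subseteq> F0 - A" unfolding F'_def F0_def by blast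
  have pr': "proper C' {e\<in>F'. x \<notin> ends e} ends c1"
    unfolding proper_def
  proof (intro conjI ballI impI)
    fix e assume "e \<in> {e\<in>F'. x \<notin> ends e}"
    then have "e \<in> F0" "e \<notin> A" using F'0 by blast+
    then show "c1 e \<in> C'" using V1 unfolding C'_def A_def by blast
  next
    fix e f assume "e \<in> {e\<in>F'. x \<notin> ends e}" "f \<in> {e\<in>F'. x \<notin> ends e}" "e \<noteq> f \<and> ends e \<inter> ends f \<noteq> {}"
    then show "c1 e \<noteq> c1 f" using P1 F'0 by blast
  qed
  have degx: "mg_degree F' ends x = n"
  proof -
    have "{e\<in>F'. x \<in> ends e} = {e\<in>F. x \<in> ends e} - {e0}" unfolding F'_def using Ax by blast
    moreover have "e0 \<in> {e\<in>F. x \<in> ends e}" using e0(1) x_e0 by blast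
    ultimately have "card {e\<in>F'. x \<in> ends e} = card {e\<in>F. x \<in> ends e} - 1"
      using fin by simp
    then show ?thesis using Suc.prems(1) unfolding mg_degree_def by simp
  qed
  have multw: "mg_mult F' ends x w = mg_mult F ends x w" if "w \<noteq> z" for w
  proof -
    have "ends e0 \<noteq> {x,w}" using e0(2) that zx by (auto simp: doubleton_eq_iff)
    then have "{e\<in>F'. ends e = {x,w}} = {e\<in>F. ends e = {x,w}}" unfolding F'_def using Ax by auto
    then show ?thesis unfolding mg_mult_def by simp
  qed
  have multz: "mg_mult F' ends x z + 1 = mg_mult F ends x z"
  proof -
    have "{e\<in>F'. ends e = {x,z}} = {e\<in>F. ends e = {x,z}} - {e0}" unfolding F'_def using Ax by auto
    moreover have "e0 \<in> {e\<in>F. ends e = {x,z}}" using e0 by blast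
    ultimately have "card {e\<in>F'. ends e = {x,z}} = card {e\<in>F. ends e = {x,z}} - 1" using fin by simp
    moreover have "card {e\<in>F. ends e = {x,z}} \<ge> 1" using K(2) unfolding mg_mult_def by simp
    ultimately show ?thesis unfolding mg_mult_def by simp
  qed
  have Aw: "card {e\<in>A. w \<in> ends e} = s w" for w
  proof (cases "\<alpha> \<in> used F0 ends c1 w")
    case True
    then obtain e where e: "e \<in> F0" "w \<in> ends e" "c1 e = \<alpha>" unfolding used_def by auto
    have "{e\<in>A. w \<in> ends e} = {e}"
    proof
      show "{e} \<subseteq> {e\<in>A. w \<in> ends e}" using e unfolding A_def by blast
      show "{e\<in>A. w \<in> ends e} \<subseteq> {e}"
      proof
        fix f assume f: "f \<in> {e\<in>A. w \<in> ends e}"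
        then have fF: "f \<in> F0" "c1 f = \<alpha>" "w \<in> ends f" unfolding A_def by blast+
        have i: "ends f \<inter> ends e \<noteq> {}" using fF(3) e(2) by blast
        have "f = e"
        proof (rule ccontr)
          assume "f \<noteq> e"
          then have "c1 f \<noteq> c1 e" using P1 fF(1) e(1) i by blast
          then show False using fF(2) e(3) by simp
        qed
        then show "f \<in> {e}" by simp
      qed
    qed
    then show ?thesis using True unfolding s_def by simp
  next
    case False
    then have E: "{e\<in>A. w \<in> ends e} = {}" unfolding A_def used_def by blast
    have "s w = 0" using False unfolding s_def by simp
    then show ?thesis unfolding E by (simp only: card.empty)
  qed
  have degw: "mg_degree F' ends w + s w = mg_degree F ends w" if "w \<noteq> z" "w \<noteq> x" for w
  proof -
    have "w \<notin> ends e0" unfolding e0(2) using that by simp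
    then have eq: "{e\<in>F. w \<in> ends e} = {e\<in>F'. w \<in> ends e} \<union> {e\<in>A. w \<in> ends e}"
      unfolding F'_def using AF by blast
    have "card ({e\<in>F'. w \<in> ends e} \<union> {e\<in>A. w \<in> ends e}) = card {e\<in>F'. w \<in> ends e} + card {e\<in>A. w \<in> ends e}"
    proof (rule card_Un_disjoint)
      show "finite {e\<in>F'. w \<in> ends e}" using finF' by simp
      have "finite A" using AF fin by (rule finite_subset)
      then show "finite {e\<in>A. w \<in> ends e}" by simp
      show "{e\<in>F'. w \<in> ends e} \<inter> {e\<in>A. w \<in> ends e} = {}" unfolding F'_def by blast
    qed
    then show ?thesis unfolding mg_degree_def eq Aw by simp
  qed
  have degz: "mg_degree F' ends z + 1 = mg_degree F ends z"
  proof -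
    have "{e\<in>A. z \<in> ends e} = {}" using K(4) unfolding A_def used_def F0_def by blast
    then have "{e\<in>F'. z \<in> ends e} = {e\<in>F. z \<in> ends e} - {e0}" unfolding F'_def by blast
    moreover have "e0 \<in> {e\<in>F. z \<in> ends e}" using e0 by simp
    ultimately have "card {e\<in>F'. z \<in> ends e} = card {e\<in>F. z \<in> ends e} - 1" using fin by simp
    moreover have "card {e0} \<le> card {e\<in>F. z \<in> ends e}"
      by (rule card_mono) (use fin \<open>e0 \<in> {e\<in>F. z \<in> ends e}\<close> in auto)
    ultimately show ?thesis unfolding mg_degree_def by simp
  qed
  have Q: "vl F ends x w = card C \<and> (\<forall>w'. 0 < mg_mult F ends x w' \<longrightarrow> w' \<noteq> z \<longrightarrow> w' \<noteq> w \<longrightarrow>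
          vl F ends x w' \<le> card C \<and> (card C \<le> vl F ends x w' \<longrightarrow> s w' = 1))"
    if "0 < mg_mult F ends x w" "w \<noteq> z" "card C \<le> vl F ends x w" "s w = 0" for w
  proof -
    have "\<alpha> \<notin> used {e\<in>F. x \<notin> ends e} ends c1 w" using that(4) unfolding s_def F0_def by (simp split: if_splits)
    then have "vl F ends x w = card C \<and> (\<forall>w'. 0 < mg_mult F ends x w' \<longrightarrow> w' \<noteq> z \<longrightarrow> w' \<noteq> w \<longrightarrow>
          vl F ends x w' \<le> card C \<and> (card C \<le> vl F ends x w' \<longrightarrow> \<alpha> \<in> used {e\<in>F. x \<notin> ends e} ends c1 w'))"
    proof -
      have "\<forall>w. 0 < mg_mult F ends x w \<longrightarrow> w \<noteq> z \<longrightarrow> card C \<le> vl F ends x w \<longrightarrow>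
      \<alpha> \<notin> used {e\<in>F. x \<notin> ends e} ends c1 w \<longrightarrow>
      (vl F ends x w = card C \<and> (\<forall>w'. 0 < mg_mult F ends x w' \<longrightarrow> w' \<noteq> z \<longrightarrow> w' \<noteq> w \<longrightarrow>
          vl F ends x w' \<le> card C \<and> (card C \<le> vl F ends x w' \<longrightarrow> \<alpha> \<in> used {e\<in>F. x \<notin> ends e} ends c1 w')))"
        using K(5) unfolding Qc_def .
      then show ?thesis using that(1,2,3) \<open>\<alpha> \<notin> used {e\<in>F. x \<notin> ends e} ends c1 w\<close> by blast
    qed
    then show ?thesis unfolding s_def F0_def by simp
  qed
  have s01: "s w = 0 \<or> s w = 1" for w unfolding s_def by simp
  have vlw: "vl F' ends x w + s w = vl F ends x w" if "w \<noteq> z" "w \<noteq> x" for w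
    using degw[OF that] multw[OF that(1)] unfolding vl_def by simp
  have vlz: "vl F' ends x z + 2 = vl F ends x z" using degz multz unfolding vl_def by simp
  have N': "0 < mg_mult F ends x w \<and> w \<noteq> x" if "0 < mg_mult F' ends x w" for w
  proof -
    have "F' \<subseteq> F" unfolding F'_def by blast
    then have "mg_mult F' ends x w \<le> mg_mult F ends x w" by (rule mult_mono[OF _ fin])
    then have "0 < mg_mult F ends x w" using that by simp
    then show ?thesis using mult_ne[OF _ fin two] by blast
  qed
  have vz: "vl F ends x z \<le> card C + 1" using h1 K(2) by simp
  have h1': "\<forall>w. 0 < mg_mult F' ends x w \<longrightarrow> vl F' ends x w \<le> card C' + 1"
  proof (intro allI impI)
    fix w assume w: "0 < mg_mult F' ends x w"
    have wN: "0 < mg_mult F ends x w" "w \<noteq> x" using N'[OF w] by auto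
    show "vl F' ends x w \<le> card C' + 1"
    proof (cases "w = z")
      case True then show ?thesis using vlz vz cardC' kpos by simp
    next
      case False
      have e: "vl F' ends x w + s w = vl F ends x w" using vlw[OF False wN(2)] .
      have "vl F ends x w \<le> card C + 1" using h1 wN(1) by simp
      moreover have "vl F ends x w = card C + 1 \<longrightarrow> s w = 1"
      proof
        assume a: "vl F ends x w = card C + 1"
        show "s w = 1"
        proof (rule ccontr)
          assume "s w \<noteq> 1" then have "s w = 0" using s01 by blast
          then have "vl F ends x w = card C" using Q[OF wN(1) False] a by simp
          then show False using a by simp
        qed
      qed
      ultimately show ?thesis using e cardC' kpos by linarith
    qed
  qed
  have h2': "\<forall>w1 w2. 0 < mg_mult F' ends x w1 \<longrightarrow> 0 < mg_mult F' ends x w2 \<longrightarrow> w1 \<noteq> w2 \<longrightarrow>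
               vl F' ends x w1 \<le> card C' \<or> vl F' ends x w2 \<le> card C'"
  proof (intro allI impI)
    fix w1 w2 assume w: "0 < mg_mult F' ends x w1" "0 < mg_mult F' ends x w2" "w1 \<noteq> w2"
    have n1: "0 < mg_mult F ends x w1" "w1 \<noteq> x" using N'[OF w(1)] by auto
    have n2: "0 < mg_mult F ends x w2" "w2 \<noteq> x" using N'[OF w(2)] by auto
    show "vl F' ends x w1 \<le> card C' \<or> vl F' ends x w2 \<le> card C'"
    proof (cases "w1 = z \<or> w2 = z")
      case True
      then show ?thesis using vlz vz cardC' kpos by (elim disjE; simp only:; linarith)
    next
      case False
      then have z1: "w1 \<noteq> z" and z2: "w2 \<noteq> z" by auto
      have e1: "vl F' ends x w1 + s w1 = vl F ends x w1" using vlw[OF z1 n1(2)] .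
      have e2: "vl F' ends x w2 + s w2 = vl F ends x w2" using vlw[OF z2 n2(2)] .
      have b1: "vl F ends x w1 \<le> card C + 1" using h1 n1(1) by simp
      have b2: "vl F ends x w2 \<le> card C + 1" using h1 n2(1) by simp
      show ?thesis
      proof (rule ccontr)
        assume a: "\<not> (vl F' ends x w1 \<le> card C' \<or> vl F' ends x w2 \<le> card C')"
        then have g1: "vl F' ends x w1 \<ge> card C" and g2: "vl F' ends x w2 \<ge> card C"
          using cardC' kpos by auto
        consider "s w1 = 0" | "s w2 = 0" | "s w1 = 1 \<and> s w2 = 1" using s01[of w1] s01[of w2] by argo
        then show False
        proof cases
          case 1
          have "card C \<le> vl F ends x w1" using g1 e1 by linarith
          then have "\<forall>w'. 0 < mg_mult F ends x w' \<longrightarrow> w' \<noteq> z \<longrightarrow> w' \<noteq> w1 \<longrightarrow>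
              vl F ends x w' \<le> card C \<and> (card C \<le> vl F ends x w' \<longrightarrow> s w' = 1)"
            using Q[OF n1(1) z1 _ 1] by blast
          then have "vl F ends x w2 \<le> card C \<and> (card C \<le> vl F ends x w2 \<longrightarrow> s w2 = 1)"
            using n2(1) z2 w(3) by blast
          then show False using e2 g2 by linarith
        next
          case 2
          have "card C \<le> vl F ends x w2" using g2 e2 by linarith
          then have "\<forall>w'. 0 < mg_mult F ends x w' \<longrightarrow> w' \<noteq> z \<longrightarrow> w' \<noteq> w2 \<longrightarrow>
              vl F ends x w' \<le> card C \<and> (card C \<le> vl F ends x w' \<longrightarrow> s w' = 1)"
            using Q[OF n2(1) z2 _ 2] by blast
          then have "vl F ends x w1 \<le> card C \<and> (card C \<le> vl F ends x w1 \<longrightarrow> s w1 = 1)"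
            using n1(1) z1 w(3) by blast
          then show False using e1 g1 by linarith
        next
          case 3
          have "vl F ends x w1 \<le> card C \<or> vl F ends x w2 \<le> card C" using h2 n1(1) n2(1) w(3) by blast
          then show False using 3 e1 e2 g1 g2 by linarith
        qed
      qed
    qed
  qed
  have dx': "mg_degree F' ends x \<le> card C'" using degx Suc.prems(1) dx cardC' by simp
  obtain c2 where c2: "proper C' F' ends c2"
    using Suc.IH[OF degx finF' twoF' finC' pr' dx' h1' h2'] by blast
  define c3 where "c3 = (\<lambda>e. if e = e0 \<or> e \<in> A then \<alpha> else c2 e)"
  have V2: "\<forall>e\<in>F'. c2 e \<in> C'" using c2 unfolding proper_def by (rule conjunct1)
  have P2: "\<forall>e\<in>F'. \<forall>f\<in>F'. e \<noteq> f \<and> ends e \<inter> ends f \<noteq> {} \<longrightarrow> c2 e \<noteq> c2 f"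
    using c2 unfolding proper_def by (rule conjunct2)
  have spec: "False" if s1: "e \<in> insert e0 A" and s2: "f \<in> insert e0 A" and s3: "e \<noteq> f" and s4: "ends e \<inter> ends f \<noteq> {}" for e f
  proof -
    have noe0: False if "g \<in> A" "ends e0 \<inter> ends g \<noteq> {}" for g
    proof -
      have "x \<notin> ends g" using Ax that(1) by blast
      moreover have "{x,z} \<inter> ends g \<noteq> {}" using that(2) unfolding e0(2) .
      ultimately have "z \<in> ends g" by blast
      moreover have "g \<in> F0" "c1 g = \<alpha>" using that(1) unfolding A_def by blast+
      ultimately have "\<alpha> \<in> used F0 ends c1 z" unfolding used_def by blast
      then show False using K(4) F0_def by simp
    qed
    consider "e = e0" "f \<in> A" | "f = e0" "e \<in> A" | "e \<in> A" "f \<in> A" using s1 s2 s3 by blast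
    then show False
    proof cases
      case 1 then show False using noe0 s4 by blast
    next
      case 2 then show False using noe0[of e] s4 by (simp add: Int_commute)
    next
      case 3
      then have "e \<in> F0" "f \<in> F0" "c1 e = \<alpha>" "c1 f = \<alpha>" unfolding A_def by blast+
      then have "c1 e \<noteq> c1 f" using P1 s3 s4 by blast
      then show False using \<open>c1 e = \<alpha>\<close> \<open>c1 f = \<alpha>\<close> by simp
    qed
  qed
  have "proper C F ends c3"
    unfolding proper_def
  proof (intro conjI ballI impI)
    fix e assume "e \<in> F"
    show "c3 e \<in> C"
    proof (cases "e = e0 \<or> e \<in> A")
      case True then show ?thesis using K(3) unfolding c3_def by simp
    next
      case False
      then have "e \<in> F'" using \<open>e \<in> F\<close> unfolding F'_def by blast
      then show ?thesis using V2 False unfolding c3_def C'_def by auto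
    qed
  next
    fix e f assume ef: "e \<in> F" "f \<in> F" "e \<noteq> f \<and> ends e \<inter> ends f \<noteq> {}"
    show "c3 e \<noteq> c3 f"
    proof (cases "e = e0 \<or> e \<in> A")
      case True
      show ?thesis
      proof (cases "f = e0 \<or> f \<in> A")
        case True
        then show ?thesis using spec[of e f] \<open>e = e0 \<or> e \<in> A\<close> ef by blast
      next
        case False
        then have "f \<in> F'" using ef unfolding F'_def by blast
        then have "c2 f \<in> C'" using V2 by blast
        then show ?thesis using True False unfolding c3_def C'_def by auto
      qed
    next
      case False
      then have eF': "e \<in> F'" using ef unfolding F'_def by blast
      show ?thesis
      proof (cases "f = e0 \<or> f \<in> A")
        case True
        have "c2 e \<in> C'" using V2 eF' by blast
        then show ?thesis using True False unfolding c3_def C'_def by auto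
      next
        case nf: False
        then have "f \<in> F'" using ef unfolding F'_def by blast
        then have "c2 e \<noteq> c2 f" using P2 eF' ef by blast
        then show ?thesis using False nf unfolding c3_def by simp
      qed
    qed
  qed
  then show ?case by blast
qed

lemma fin_img_set: "finite V \<Longrightarrow> finite {f v | v. v \<in> V}"
  by (simp add: finite_image_set)

lemma dmu_le: "finite V \<Longrightarrow> v \<in> V \<Longrightarrow> mg_degree F ends v + mg_mu V F ends v \<le> mg_Delta_mu V F ends"
  unfolding mg_Delta_mu_def by (rule Max_ge) (auto simp: fin_img_set)

lemma mult_le_mu: "finite V \<Longrightarrow> w \<in> V \<Longrightarrow> mg_mult F ends v w \<le> mg_mu V F ends v"
  unfolding mg_mu_def by (rule Max_ge) (auto simp: fin_img_set)

lemma mult_le_deg: "finite F \<Longrightarrow> mg_mult F ends v w \<le> mg_degree F ends v"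
  unfolding mg_mult_def mg_degree_def by (rule card_mono) auto

lemma mu_le_deg:
  assumes "finite V" "finite F" shows "mg_mu V F ends v \<le> mg_degree F ends v"
proof -
  have "mg_mu V F ends v \<in> insert 0 {mg_mult F ends v w | w. w \<in> V}"
    unfolding mg_mu_def by (rule Max_in) (auto simp: fin_img_set assms)
  then show ?thesis using mult_le_deg[OF assms(2)] by auto
qed

lemma mu_mono:
  assumes "F' \<subseteq> F" "finite F" "finite V" shows "mg_mu V F' ends v \<le> mg_mu V F ends v"
proof -
  have "mg_mu V F' ends v \<in> insert 0 {mg_mult F' ends v w | w. w \<in> V}"
    unfolding mg_mu_def by (rule Max_in) (auto simp: fin_img_set assms)
  then show ?thesis
  proof
    assume "mg_mu V F' ends v = 0" then show ?thesis by simp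
  next
    assume "mg_mu V F' ends v \<in> {mg_mult F' ends v w | w. w \<in> V}"
    then obtain w where w: "w \<in> V" "mg_mu V F' ends v = mg_mult F' ends v w" by blast
    have "mg_mult F' ends v w \<le> mg_mult F ends v w" by (rule mult_mono[OF assms(1,2)])
    also have "\<dots> \<le> mg_mu V F ends v" by (rule mult_le_mu[OF assms(3) w(1)])
    finally show ?thesis using w(2) by simp
  qed
qed

lemma Delta_mono:
  assumes "F' \<subseteq> F" "finite F" "finite V" shows "mg_Delta_mu V F' ends \<le> mg_Delta_mu V F ends"
proof -
  have "mg_Delta_mu V F' ends \<in> insert 0 {mg_degree F' ends v + mg_mu V F' ends v | v. v \<in> V}"
    unfolding mg_Delta_mu_def by (rule Max_in) (auto simp: fin_img_set assms)
  then show ?thesis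
  proof
    assume "mg_Delta_mu V F' ends = 0" then show ?thesis by simp
  next
    assume "mg_Delta_mu V F' ends \<in> {mg_degree F' ends v + mg_mu V F' ends v | v. v \<in> V}"
    then obtain v where v: "v \<in> V" "mg_Delta_mu V F' ends = mg_degree F' ends v + mg_mu V F' ends v" by blast
    have "mg_degree F' ends v \<le> mg_degree F ends v" by (rule deg_mono[OF assms(1,2)])
    moreover have "mg_mu V F' ends v \<le> mg_mu V F ends v" by (rule mu_mono[OF assms])
    moreover have "mg_degree F ends v + mg_mu V F ends v \<le> mg_Delta_mu V F ends" by (rule dmu_le[OF assms(3) v(1)])
    ultimately show ?thesis using v(2) by linarith
  qed
qed

lemma Delta_attained:
  assumes "finite V" "0 < mg_Delta_mu V F ends"
  shows "\<exists>v\<in>V. mg_degree F ends v + mg_mu V F ends v = mg_Delta_mu V F ends"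
proof -
  have "mg_Delta_mu V F ends \<in> insert 0 {mg_degree F ends v + mg_mu V F ends v | v. v \<in> V}"
    unfolding mg_Delta_mu_def by (rule Max_in) (auto simp: fin_img_set assms)
  then show ?thesis using assms(2) by auto
qed

lemma cycle_mono:
  assumes "S' \<subseteq> S" "F' \<subseteq> F" "finite F" "has_long_cycle_in S' F' ends"
  shows "has_long_cycle_in S F ends"
proof -
  obtain vs where vs: "length vs \<ge> 3" "distinct vs" "set vs \<subseteq> S'"
    "\<forall>i < length vs. mg_mult F' ends (vs ! i) (vs ! ((i + 1) mod length vs)) > 0"
    using assms(4) unfolding has_long_cycle_in_def by blast
  have "\<forall>i < length vs. mg_mult F ends (vs ! i) (vs ! ((i + 1) mod length vs)) > 0"
  proof (intro allI impI)
    fix i assume "i < length vs"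
    then have "mg_mult F' ends (vs ! i) (vs ! ((i + 1) mod length vs)) > 0" using vs(4) by blast
    moreover have "mg_mult F' ends (vs ! i) (vs ! ((i + 1) mod length vs)) \<le> mg_mult F ends (vs ! i) (vs ! ((i + 1) mod length vs))"
      by (rule mult_mono[OF assms(2,3)])
    ultimately show "mg_mult F ends (vs ! i) (vs ! ((i + 1) mod length vs)) > 0" by linarith
  qed
  then show ?thesis unfolding has_long_cycle_in_def using vs(1,2,3) assms(1) by blast
qed

lemma mult_sym: "mg_mult F ends u v = mg_mult F ends v u"
  unfolding mg_mult_def by (simp add: insert_commute)

lemma leaf:
  fixes S :: "'v set" and F :: "'e set"
  assumes finS: "finite S" and ne: "S \<noteq> {}" and nc: "\<not> has_long_cycle_in S F ends"
    and irr: "\<forall>v. mg_mult F ends v v = 0"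
  shows "\<exists>x\<in>S. \<forall>u1\<in>S. \<forall>u2\<in>S. 0 < mg_mult F ends x u1 \<longrightarrow> 0 < mg_mult F ends x u2 \<longrightarrow> u1 = u2"
proof (rule ccontr)
  assume "\<not> ?thesis"
  then have H: "\<forall>x\<in>S. \<exists>u1\<in>S. \<exists>u2\<in>S. 0 < mg_mult F ends x u1 \<and> 0 < mg_mult F ends x u2 \<and> u1 \<noteq> u2"
    by blast
  define R where "R = (\<lambda>u v. 0 < mg_mult F ends u v)"
  have Rsym: "R u v \<Longrightarrow> R v u" for u v unfolding R_def using mult_sym by metis
  define P where "P = (\<lambda>p. wk R p \<and> distinct p \<and> set p \<subseteq> S \<and> p \<noteq> [])"
  obtain s where s: "s \<in> S" using ne by blast
  have Ps: "P [s]" unfolding P_def using s by simp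
  have bound: "\<forall>y. P y \<longrightarrow> length y < card S + 1"
  proof (intro allI impI)
    fix y assume "P y"
    then have "distinct y" "set y \<subseteq> S" unfolding P_def by auto
    then have "length y \<le> card S" using card_mono[OF finS] distinct_card by metis
    then show "length y < card S + 1" by simp
  qed
  obtain p where p: "P p" and pmax: "\<forall>y. P y \<longrightarrow> length y \<le> length p"
    using Lattices_Big.ex_has_greatest_nat[of P "[s]" length "card S + 1", OF Ps bound] by blast
  have pw: "wk R p" "distinct p" "set p \<subseteq> S" "p \<noteq> []" using p unfolding P_def by auto
  obtain a rest where ar: "p = a # rest" using pw(4) by (cases p) auto
  have aS: "a \<in> S" using pw(3) ar by simp
  have inp: "u \<in> set p" if "u \<in> S" "R a u" for u
  proof (rule ccontr)
    assume nu: "u \<notin> set p"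
    have "wk R (u # p)" using pw(1) Rsym[OF that(2)] ar by simp
    then have "P (u # p)" unfolding P_def using nu pw that(1) by simp
    then show False using pmax by fastforce
  qed
  obtain u1 u2 where u: "u1 \<in> S" "u2 \<in> S" "R a u1" "R a u2" "u1 \<noteq> u2" using H aS unfolding R_def by blast
  obtain j1 where j1: "j1 < length p" "p ! j1 = u1" using inp[OF u(1) u(3)] by (metis in_set_conv_nth)
  obtain j2 where j2: "j2 < length p" "p ! j2 = u2" using inp[OF u(2) u(4)] by (metis in_set_conv_nth)
  have p0: "p ! 0 = a" using ar by simp
  have Raa: "\<not> R a a" unfolding R_def using irr by simp
  have "j1 \<noteq> 0"
  proof
    assume "j1 = 0" then have "u1 = a" using j1(2) p0 by simp
    then show False using u(3) Raa by simp
  qed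
  moreover have "j2 \<noteq> 0"
  proof
    assume "j2 = 0" then have "u2 = a" using j2(2) p0 by simp
    then show False using u(4) Raa by simp
  qed
  moreover have "j1 \<noteq> j2" using j1 j2 u(5) by auto
  ultimately obtain j where j: "j < length p" "2 \<le> j" "R a (p ! j)"
  proof (cases "2 \<le> j1")
    case True then show ?thesis using that j1 u(3) by blast
  next
    case False
    then have "2 \<le> j2" using \<open>j1 \<noteq> 0\<close> \<open>j2 \<noteq> 0\<close> \<open>j1 \<noteq> j2\<close> by linarith
    then show ?thesis using that j2 u(4) by blast
  qed
  define vs where "vs = take (Suc j) p"
  have lv: "length vs = Suc j" unfolding vs_def using j(1) by simp
  have "has_long_cycle_in S F ends"
    unfolding has_long_cycle_in_def
  proof (intro exI[of _ vs] conjI)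
    show "3 \<le> length vs" using lv j(2) by simp
    show "distinct vs" unfolding vs_def using pw(2) by simp
    show "set vs \<subseteq> S" unfolding vs_def using pw(3) set_take_subset by fastforce
    show "\<forall>i<length vs. 0 < mg_mult F ends (vs ! i) (vs ! ((i + 1) mod length vs))"
    proof (intro allI impI)
      fix i assume i: "i < length vs"
      show "0 < mg_mult F ends (vs ! i) (vs ! ((i + 1) mod length vs))"
      proof (cases "i < j")
        case True
        then have m: "(i + 1) mod length vs = Suc i" using lv by simp
        have "R (p!i) (p!Suc i)" using wk_nth[OF pw(1), of i] True j(1) by simp
        moreover have "vs ! i = p ! i" "vs ! Suc i = p ! Suc i" unfolding vs_def using True by simp_all
        ultimately show ?thesis using m unfolding R_def by simp
      next
        case False
        then have ij: "i = j" using i lv by simp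
        then have m: "(i + 1) mod length vs = 0" using lv by simp
        have "R (p!j) (p!0)" using Rsym[OF j(3)] p0 by simp
        moreover have "vs ! i = p ! j" "vs ! 0 = p ! 0" unfolding vs_def using ij by simp_all
        ultimately show ?thesis using m unfolding R_def by simp
      qed
    qed
  qed
  then show False using nc by simp
qed

lemma main_ind:
  fixes V :: "'v set" and E :: "'e set" and ends :: "'e \<Rightarrow> 'v set"
  assumes lm: "loopless_multigraph V E ends"
  shows "\<forall>F k. F \<subseteq> E \<longrightarrow> card F = n \<longrightarrow>
     (mg_Delta_mu V F ends \<le> k \<or> (mg_Delta_mu V F ends \<le> k + 1 \<and> \<not> has_long_cycle_in (mg_star_vertices V F ends) F ends))
     \<longrightarrow> k_edge_colorable k F ends"
proof (induction n rule: less_induct)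
  case (less n)
  show ?case
  proof (intro allI impI)
    fix F k
    assume FE: "F \<subseteq> E" and cF: "card F = n"
      and hyp: "mg_Delta_mu V F ends \<le> k \<or> (mg_Delta_mu V F ends \<le> k + 1 \<and> \<not> has_long_cycle_in (mg_star_vertices V F ends) F ends)"
    have finV: "finite V" and finE: "finite E" and EV: "\<forall>e\<in>E. ends e \<subseteq> V \<and> card (ends e) = 2"
      using lm unfolding loopless_multigraph_def by auto
    have fin: "finite F" using finE FE by (rule finite_subset[rotated])
    have two: "\<forall>e\<in>F. card (ends e) = 2" using EV FE by blast
    have FV: "\<forall>e\<in>F. ends e \<subseteq> V" using EV FE by blast
    define D where "D = mg_Delta_mu V F ends"
    have Dk: "D \<le> k + 1" using hyp D_def by linarith
    have irr: "\<forall>v. mg_mult F ends v v = 0"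
    proof
      fix v
      have "{e\<in>F. ends e = {v,v}} = {}"
      proof (rule ccontr)
        assume "{e\<in>F. ends e = {v,v}} \<noteq> {}"
        then obtain e where e: "e \<in> F" "ends e = {v}" by auto
        have "card (ends e) = 2" using two e(1) by blast
        then show False using e(2) by simp
      qed
      then show "mg_mult F ends v v = 0" unfolding mg_mult_def by (simp only: card.empty)
    qed
    have nbV: "w \<in> V" if vw: "0 < mg_mult F ends v w" for v w
    proof -
      obtain e where e: "e \<in> F" "ends e = {v,w}" using mult_edge[OF vw fin] by blast
      have "w \<in> ends e" unfolding e(2) by simp
      then show ?thesis using FV e(1) by blast
    qed
    show "k_edge_colorable k F ends"
    proof (cases "F = {}")
      case True
      then show ?thesis unfolding k_edge_colorable_def by auto
    next
      case False
      then obtain e1 where e1: "e1 \<in> F" by blast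
      have "card (ends e1) = 2" using two e1 by blast
      then obtain a b where ab: "ends e1 = {a,b}" "a \<noteq> b" using card_2_iff[THEN iffD1] by blast
      have mab: "0 < mg_mult F ends a b"
      proof -
        have "e1 \<in> {e\<in>F. ends e = {a,b}}" using e1 ab by blast
        then have "card {e1} \<le> card {e\<in>F. ends e = {a,b}}" by (intro card_mono) (use fin in auto)
        then show ?thesis unfolding mg_mult_def by simp
      qed
      have aV: "a \<in> V" using FV e1 ab by blast
      have bV: "b \<in> V" using FV e1 ab by blast
      have Dpos: "2 \<le> D"
      proof -
        have "1 \<le> mg_degree F ends a" using mult_le_deg[OF fin, of ends a b] mab by linarith
        moreover have "1 \<le> mg_mu V F ends a" using mult_le_mu[OF finV bV, of F ends a] mab by linarith
        moreover have "mg_degree F ends a + mg_mu V F ends a \<le> D" using dmu_le[OF finV aV, of F ends] D_def by simp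
        ultimately show ?thesis by linarith
      qed
      obtain x where xV: "x \<in> V" and dxp: "0 < mg_degree F ends x"
        and hx2: "\<forall>z z'. 0 < mg_mult F ends x z \<longrightarrow> 0 < mg_mult F ends x z' \<longrightarrow> z \<noteq> z' \<longrightarrow>
               vl F ends x z \<le> k \<or> vl F ends x z' \<le> k"
      proof (cases "D \<le> k")
        case True
        have "\<forall>z z'. 0 < mg_mult F ends a z \<longrightarrow> 0 < mg_mult F ends a z' \<longrightarrow> z \<noteq> z' \<longrightarrow>
               vl F ends a z \<le> k \<or> vl F ends a z' \<le> k"
        proof (intro allI impI)
          fix z z' assume z: "0 < mg_mult F ends a z"
          have zV: "z \<in> V" using nbV[OF z] .
          have "vl F ends a z \<le> mg_degree F ends z + mg_mu V F ends z"
            using mult_le_mu[OF finV zV, of F ends a] mult_sym[of F ends a z] mult_le_mu[OF finV aV, of F ends z]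
            unfolding vl_def by linarith
          then show "vl F ends a z \<le> k \<or> vl F ends a z' \<le> k" using dmu_le[OF finV zV, of F ends] D_def True by linarith
        qed
        moreover have "0 < mg_degree F ends a" using mult_le_deg[OF fin, of ends a b] mab by linarith
        ultimately show ?thesis using that aV by blast
      next
        case False
        then have Dk1: "D = k + 1" using Dk by linarith
        have nc: "\<not> has_long_cycle_in (mg_star_vertices V F ends) F ends" using hyp False D_def by linarith
        define S where "S = mg_star_vertices V F ends"
        have finS: "finite S" unfolding S_def mg_star_vertices_def using finV by simp
        obtain v0 where v0: "v0 \<in> V" "mg_degree F ends v0 + mg_mu V F ends v0 = D"
        proof -
          have "0 < mg_Delta_mu V F ends" using Dpos D_def by simp
          then show ?thesis using Delta_attained[OF finV, of F ends] that D_def by blast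
        qed
        have neS: "S \<noteq> {}" unfolding S_def mg_star_vertices_def using v0 D_def by blast
        obtain x where xS: "x \<in> S"
          and one: "\<forall>u1\<in>S. \<forall>u2\<in>S. 0 < mg_mult F ends x u1 \<longrightarrow> 0 < mg_mult F ends x u2 \<longrightarrow> u1 = u2"
          using leaf[OF finS neS _ irr] nc S_def by blast
        have xV: "x \<in> V" and xD: "mg_degree F ends x + mg_mu V F ends x = D"
          using xS unfolding S_def mg_star_vertices_def D_def by auto
        have "0 < mg_degree F ends x"
        proof (rule ccontr)
          assume "\<not> 0 < mg_degree F ends x"
          then have "mg_degree F ends x = 0" by simp
          moreover have "mg_mu V F ends x \<le> mg_degree F ends x" by (rule mu_le_deg[OF finV fin])
          ultimately show False using xD Dpos by linarith
        qed
        moreover have "\<forall>z z'. 0 < mg_mult F ends x z \<longrightarrow> 0 < mg_mult F ends x z' \<longrightarrow> z \<noteq> z' \<longrightarrow>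
               vl F ends x z \<le> k \<or> vl F ends x z' \<le> k"
        proof (intro allI impI)
          fix z z' assume z: "0 < mg_mult F ends x z" and z': "0 < mg_mult F ends x z'" and ne: "z \<noteq> z'"
          have inS: "u \<in> S" if u: "0 < mg_mult F ends x u" "\<not> vl F ends x u \<le> k" for u
          proof -
            have uV: "u \<in> V" using nbV[OF u(1)] .
            have "vl F ends x u \<le> mg_degree F ends u + mg_mu V F ends u"
              using mult_le_mu[OF finV xV, of F ends u] mult_sym[of F ends x u] unfolding vl_def by linarith
            moreover have "mg_degree F ends u + mg_mu V F ends u \<le> D" using dmu_le[OF finV uV, of F ends] D_def by simp
            ultimately have "mg_degree F ends u + mg_mu V F ends u = D" using u(2) Dk1 by linarith
            then show ?thesis unfolding S_def mg_star_vertices_def D_def using uV by simp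
          qed
          show "vl F ends x z \<le> k \<or> vl F ends x z' \<le> k"
          proof (rule ccontr)
            assume "\<not> (vl F ends x z \<le> k \<or> vl F ends x z' \<le> k)"
            then have "z \<in> S" "z' \<in> S" using inS z z' by auto
            then show False using one z z' ne by blast
          qed
        qed
        ultimately show ?thesis using that xV by blast
      qed
      define F0 where "F0 = {e\<in>F. x \<notin> ends e}"
      have F0F: "F0 \<subseteq> F" unfolding F0_def by blast
      have "F0 \<noteq> F"
      proof
        assume "F0 = F"
        then have "{e\<in>F. x \<in> ends e} = {}" unfolding F0_def by blast
        then have "mg_degree F ends x = 0" unfolding mg_degree_def by (simp only: card.empty)
        then show False using dxp by simp
      qed
      then have "F0 \<subset> F" using F0F by blast
      then have "card F0 < card F" using fin by (rule psubset_card_mono[rotated])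
      then have cF0: "card F0 < n" using cF by simp
      have D0: "mg_Delta_mu V F0 ends \<le> D" unfolding D_def by (rule Delta_mono[OF F0F fin finV])
      have hyp0: "mg_Delta_mu V F0 ends \<le> k \<or> (mg_Delta_mu V F0 ends \<le> k + 1 \<and> \<not> has_long_cycle_in (mg_star_vertices V F0 ends) F0 ends)"
      proof (cases "mg_Delta_mu V F0 ends \<le> k")
        case True then show ?thesis by blast
      next
        case False
        then have eqD: "mg_Delta_mu V F0 ends = D" using D0 Dk by linarith
        then have "\<not> D \<le> k" using False by simp
        then have nc: "\<not> has_long_cycle_in (mg_star_vertices V F ends) F ends" using hyp D_def by linarith
        have sub: "mg_star_vertices V F0 ends \<subseteq> mg_star_vertices V F ends"
        proof
          fix v assume "v \<in> mg_star_vertices V F0 ends"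
          then have v: "v \<in> V" "mg_degree F0 ends v + mg_mu V F0 ends v = D"
            unfolding mg_star_vertices_def using eqD by auto
          have "mg_degree F0 ends v \<le> mg_degree F ends v" by (rule deg_mono[OF F0F fin])
          moreover have "mg_mu V F0 ends v \<le> mg_mu V F ends v" by (rule mu_mono[OF F0F fin finV])
          moreover have "mg_degree F ends v + mg_mu V F ends v \<le> D" using dmu_le[OF finV v(1), of F ends] D_def by simp
          ultimately have "mg_degree F ends v + mg_mu V F ends v = mg_Delta_mu V F ends" using v(2) D_def by linarith
          then show "v \<in> mg_star_vertices V F ends" unfolding mg_star_vertices_def using v(1) by simp
        qed
        have "\<not> has_long_cycle_in (mg_star_vertices V F0 ends) F0 ends"
          using cycle_mono[OF sub F0F fin] nc by blast
        then show ?thesis using eqD Dk by simp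
      qed
      have "k_edge_colorable k F0 ends"
        using less.IH[OF cF0] F0F FE hyp0 by blast
      then obtain c where c: "\<forall>e\<in>F0. c e \<in> {1..k}"
        "\<forall>e\<in>F0. \<forall>f\<in>F0. e \<noteq> f \<and> ends e \<inter> ends f \<noteq> {} \<longrightarrow> c e \<noteq> c f"
        unfolding k_edge_colorable_def by blast
      have prc: "proper {1..k} {e\<in>F. x \<notin> ends e} ends c" unfolding proper_def using c F0_def by blast
      have ck: "card {1..k} = k" by simp
      have mux: "1 \<le> mg_mu V F ends x"
      proof -
        have "{e\<in>F. x \<in> ends e} \<noteq> {}"
        proof
          assume "{e\<in>F. x \<in> ends e} = {}"
          then have "mg_degree F ends x = 0" unfolding mg_degree_def by (simp only: card.empty)
          then show False using dxp by simp
        qed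
        then obtain e where e: "e \<in> F" "x \<in> ends e" by blast
        have "card (ends e) = 2" using two e(1) by blast
        then obtain u where u: "ends e = {x,u}" using two_other[OF _ e(2)] by blast
        have "card {e} \<le> card {e\<in>F. ends e = {x,u}}" by (intro card_mono) (use fin e u in auto)
        then have m: "0 < mg_mult F ends x u" unfolding mg_mult_def by simp
        show ?thesis using mult_le_mu[OF finV nbV[OF m], of F ends x] m by linarith
      qed
      have dx: "mg_degree F ends x \<le> card {1..k}"
        using dmu_le[OF finV xV, of F ends] D_def Dk mux ck by linarith
      have h1: "\<forall>z. 0 < mg_mult F ends x z \<longrightarrow> vl F ends x z \<le> card {1..k} + 1"
      proof (intro allI impI)
        fix z assume z: "0 < mg_mult F ends x z"
        have zV: "z \<in> V" using nbV[OF z] .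
        have "vl F ends x z \<le> mg_degree F ends z + mg_mu V F ends z"
          using mult_le_mu[OF finV xV, of F ends z] mult_sym[of F ends x z] unfolding vl_def by linarith
        then show "vl F ends x z \<le> card {1..k} + 1" using dmu_le[OF finV zV, of F ends] D_def Dk ck by linarith
      qed
      have h2: "\<forall>z z'. 0 < mg_mult F ends x z \<longrightarrow> 0 < mg_mult F ends x z' \<longrightarrow> z \<noteq> z' \<longrightarrow>
               vl F ends x z \<le> card {1..k} \<or> vl F ends x z' \<le> card {1..k}" using hx2 ck by simp
      obtain c' where "proper {1..k} F ends c'"
        using vizing_vertex[OF refl fin two _ prc dx h1 h2] by blast
      then show ?thesis unfolding k_edge_colorable_def proper_def by blast
    qed
  qed
qed

theorem mainTheorem5:
  fixes V :: "'v set" and E :: "'e set" and ends :: "'e \<Rightarrow> 'v set" and k :: nat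
  assumes "loopless_multigraph V E ends"
    and "k \<ge> 1"
    and "int k \<ge> int (mg_Delta_mu V E ends) - 1"
    and "\<not> has_long_cycle_in (mg_star_vertices V E ends) E ends"
  shows "k_edge_colorable k E ends"
proof -
  have "mg_Delta_mu V E ends \<le> k + 1" using assms(3) by linarith
  then show ?thesis using main_ind[OF assms(1), of "card E"] assms(4) by blast
qed

end
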